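(* Let $n\ge 4$. For every extreme point $\bar x$ of $P^n$ with all coordinates in $\{0,\tfrac12,1\}$ there exist $y^1,y^2\in\mathcal C^n$ such that $\bar x=\tfrac12 y^1+\tfrac12 y^2$.
   Context: Let $V=\{0,\dots,n-1\}$ and $E=\{(u,v)\in V\times V:u\neq v\}$ be the arc set of the complete digraph, with arcs written $uv$. For $w\in V$ let $\delta^+(w)$ and $\delta^-(w)$ denote the sets of arcs leaving and entering $w$. For $S\subseteq V$ let $\delta^+(S)=\{uv\in E:u\in S,\ v\notin S\}$, and let $\mathcal S=\{S\subset V:2\le|S|\le n-2\}$. For $x\in\mathbb R^E$ and $F\subseteq E$ write $x(F)=\sum_{e\in F}x_e$. The asymmetric subtour elimination polytope is $$P^n=\{x\in\mathbb R^E:\ x(\delta^+(w))=1 \text{ and } x(\delta^-(w))=1\ \forall w\in V,\ \ x(\delta^+(S))\ge 1\ \forall S\in\mathcal S,\ \ x\ge 0\}.$$ Let $\mathcal C^n=\{y\in\{0,1\}^E:\ y(\delta^+(w))=y(\delta^-(w))=1\ \forall w\in V\}$. These are the characteristic vectors of cycle covers, i.e. of spanning collections of vertex-disjoint directed cycles, each of length at least $2$, covering $V$. *)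

theory Defs
  imports "HOL-Analysis.Analysis"
begin

text \<open>Vertices are 0..n-1; arcs are pairs (u,v) with u \<noteq> v. A vector in R^E is modelled
  as a function nat \<times> nat \<Rightarrow> real that vanishes outside E.\<close>

definition arcs :: "nat \<Rightarrow> (nat \<times> nat) set" where
  "arcs n = {(u,v). u < n \<and> v < n \<and> u \<noteq> v}"

definition out_arcs :: "nat \<Rightarrow> nat set \<Rightarrow> (nat \<times> nat) set" where
  "out_arcs n S = {(u,v) \<in> arcs n. u \<in> S \<and> v \<notin> S}"

definition delta_out :: "nat \<Rightarrow> nat \<Rightarrow> (nat \<times> nat) set" where
  "delta_out n w = {(u,v) \<in> arcs n. u = w}"

definition delta_in :: "nat \<Rightarrow> nat \<Rightarrow> (nat \<times> nat) set" where
  "delta_in n w = {(u,v) \<in> arcs n. v = w}"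

definition RE :: "nat \<Rightarrow> (nat \<times> nat \<Rightarrow> real) set" where
  "RE n = {x. \<forall>e. e \<notin> arcs n \<longrightarrow> x e = 0}"

definition ASEP :: "nat \<Rightarrow> (nat \<times> nat \<Rightarrow> real) set" where
  "ASEP n = {x \<in> RE n.
     (\<forall>w < n. sum x (delta_out n w) = 1 \<and> sum x (delta_in n w) = 1) \<and>
     (\<forall>S. S \<subseteq> {0..<n} \<and> 2 \<le> card S \<and> card S \<le> n - 2 \<longrightarrow> sum x (out_arcs n S) \<ge> 1) \<and>
     (\<forall>e \<in> arcs n. x e \<ge> 0)}"

definition cycle_covers :: "nat \<Rightarrow> (nat \<times> nat \<Rightarrow> real) set" where
  "cycle_covers n = {y \<in> RE n. (\<forall>e \<in> arcs n. y e = 0 \<or> y e = 1) \<and>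
     (\<forall>w < n. sum y (delta_out n w) = 1 \<and> sum y (delta_in n w) = 1)}"

text \<open>Extreme point, literally as extreme_point_of in HOL-Analysis (x \<in> S and x not in the
  open segment of two points of S), spelled out for function vectors.\<close>
definition extreme_pt :: "(nat \<times> nat \<Rightarrow> real) \<Rightarrow> (nat \<times> nat \<Rightarrow> real) set \<Rightarrow> bool" where
  "extreme_pt x S \<longleftrightarrow> x \<in> S \<and>
     (\<forall>a \<in> S. \<forall>b \<in> S. \<not> (a \<noteq> b \<and> (\<exists>t::real. 0 < t \<and> t < 1 \<and> x = (\<lambda>e. (1 - t) * a e + t * b e))))"

end

theory Submission
  imports Defs
begin

definition outs :: "('a \<times> 'b) set \<Rightarrow> 'a \<Rightarrow> 'b set" where "outs H u = {v. (u,v) \<in> H}"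
definition ins :: "('a \<times> 'b) set \<Rightarrow> 'b \<Rightarrow> 'a set" where "ins H v = {u. (u,v) \<in> H}"
lemma mem_outs[simp]: "v \<in> outs H u \<longleftrightarrow> (u,v) \<in> H" by (simp add: outs_def)
lemma mem_ins[simp]: "u \<in> ins H v \<longleftrightarrow> (u,v) \<in> H" by (simp add: ins_def)
lemma outs_ins[simp]: "outs (insert (p,q) A) u = (if u = p then insert q (outs A u) else outs A u)"
  by (auto simp: outs_def)
lemma ins_ins[simp]: "ins (insert (p,q) A) v = (if v = q then insert p (ins A v) else ins A v)"
  by (auto simp: ins_def)
lemma outs_Un[simp]: "outs (A \<union> B) u = outs A u \<union> outs B u" by (auto simp: outs_def)
lemma ins_Un[simp]: "ins (A \<union> B) u = ins A u \<union> ins B u" by (auto simp: ins_def)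
lemma outs_Diff[simp]: "outs (A - B) u = outs A u - outs B u" by (auto simp: outs_def)
lemma ins_Diff[simp]: "ins (A - B) u = ins A u - ins B u" by (auto simp: ins_def)
lemma outs_empty[simp]: "outs {} u = {}" by (auto simp: outs_def)
lemma ins_empty[simp]: "ins {} u = {}" by (auto simp: ins_def)
lemma outs_mono: "A \<subseteq> B \<Longrightarrow> outs A u \<subseteq> outs B u" by (auto simp: outs_def)
lemma ins_mono: "A \<subseteq> B \<Longrightarrow> ins A u \<subseteq> ins B u" by (auto simp: ins_def)

lemma two_elem: "x \<in> A \<Longrightarrow> A = {} \<or> (\<exists>v w. v \<noteq> w \<and> A = {v,w}) \<Longrightarrow> \<exists>y. y \<noteq> x \<and> A = {x,y}"
  by auto

lemma finish:
  assumes "H1 \<subseteq> H" "\<forall>u. outs H' u \<noteq> {} \<longrightarrow> (\<exists>v. outs H1' u = {v})"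
    "\<forall>v. ins H' v \<noteq> {} \<longrightarrow> (\<exists>u. ins H1' v = {u})"
    "\<And>u. outs H u \<noteq> {} \<Longrightarrow> (outs H1 u = outs H1' u \<and> outs H' u \<noteq> {}) \<or> (\<exists>v. outs H1 u = {v})"
    "\<And>v. ins H v \<noteq> {} \<Longrightarrow> (ins H1 v = ins H1' v \<and> ins H' v \<noteq> {}) \<or> (\<exists>u. ins H1 v = {u})"
  shows "\<exists>H1\<subseteq>H. (\<forall>u. outs H u \<noteq> {} \<longrightarrow> (\<exists>v. outs H1 u = {v})) \<and> (\<forall>v. ins H v \<noteq> {} \<longrightarrow> (\<exists>u. ins H1 v = {u}))"
  using assms by metis

lemma split2:
  fixes H :: "('a \<times> 'b) set"
  assumes "finite H"
  and "\<forall>u. outs H u = {} \<or> (\<exists>v w. v \<noteq> w \<and> outs H u = {v,w})"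
  and "\<forall>v. ins H v = {} \<or> (\<exists>u w. u \<noteq> w \<and> ins H v = {u,w})"
  shows "\<exists>H1\<subseteq>H. (\<forall>u. outs H u \<noteq> {} \<longrightarrow> (\<exists>v. outs H1 u = {v})) \<and> (\<forall>v. ins H v \<noteq> {} \<longrightarrow> (\<exists>u. ins H1 v = {u}))"
  using assms
proof (induction "card H" arbitrary: H rule: less_induct)
  case less
  show ?case
  proof (cases "H = {}")
    case True
    then show ?thesis by auto
  next
    case False
    then obtain a b where ab: "(a,b) \<in> H" by auto
    obtain b' where b': "b' \<noteq> b" "outs H a = {b,b'}"
      using two_elem[of b "outs H a"] less.prems(2) ab by auto
    obtain a' where a': "a' \<noteq> a" "ins H b = {a,a'}"
      using two_elem[of a "ins H b"] less.prems(3) ab by auto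
    have ab': "(a,b') \<in> H" using b' by (metis insertI1 insert_commute mem_outs)
    have a'b: "(a',b) \<in> H" using a' by (metis insertI1 insert_commute mem_ins)
    show ?thesis
    proof (cases "(a',b') \<in> H")
      case True
      have oa': "outs H a' = {b,b'}"
      proof -
        obtain y where y: "y \<noteq> b" "outs H a' = {b,y}"
          using two_elem[of b "outs H a'"] less.prems(2) a'b by auto
        have "b' \<in> outs H a'" using True by simp
        then show ?thesis using y b' by auto
      qed
      have ib': "ins H b' = {a,a'}"
      proof -
        obtain y where y: "y \<noteq> a" "ins H b' = {a,y}"
          using two_elem[of a "ins H b'"] less.prems(3) ab' by auto
        have "a' \<in> ins H b'" using True by simp
        then show ?thesis using y a' by auto
      qed
      define H' where "H' = H - {(a,b),(a,b'),(a',b),(a',b')}"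
      have o': "outs H' u = (if u = a \<or> u = a' then {} else outs H u)" for u
        using b' oa' a' unfolding H'_def by auto
      have i': "ins H' v = (if v = b \<or> v = b' then {} else ins H v)" for v
        using a' ib' b' unfolding H'_def by auto
      have "card H' < card H" 
        by (rule psubset_card_mono[OF less.prems(1)]) (use ab in \<open>auto simp: H'_def\<close>)
      moreover have "finite H'" using less.prems(1) H'_def by auto
      ultimately have "\<exists>H1\<subseteq>H'. (\<forall>u. outs H' u \<noteq> {} \<longrightarrow> (\<exists>v. outs H1 u = {v})) \<and> (\<forall>v. ins H' v \<noteq> {} \<longrightarrow> (\<exists>u. ins H1 v = {u}))"
      proof -
        have "\<forall>u. outs H' u = {} \<or> (\<exists>v w. v \<noteq> w \<and> outs H' u = {v,w})"
          using less.prems(2) o' by simp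
        moreover have "\<forall>v. ins H' v = {} \<or> (\<exists>u w. u \<noteq> w \<and> ins H' v = {u,w})"
          using less.prems(3) i' by simp
        ultimately show ?thesis using less.hyps[of H'] \<open>card H' < card H\<close> \<open>finite H'\<close> by blast
      qed
      then obtain H1' where H1': "H1' \<subseteq> H'" "\<forall>u. outs H' u \<noteq> {} \<longrightarrow> (\<exists>v. outs H1' u = {v})"
        "\<forall>v. ins H' v \<noteq> {} \<longrightarrow> (\<exists>u. ins H1' v = {u})" by blast
      have e1: "outs H1' a = {}" "outs H1' a' = {}" "ins H1' b = {}" "ins H1' b' = {}"
        using outs_mono[OF H1'(1)] ins_mono[OF H1'(1)] o' i' by (metis subset_empty)+
      define H1 where "H1 = insert (a,b) (insert (a',b') H1')"
      have sub: "H1 \<subseteq> H" using H1' ab True unfolding H1_def H'_def by auto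
      have "outs H1 u = (if u = a then {b} else if u = a' then {b'} else outs H1' u)" for u
        using e1 a' unfolding H1_def by auto
      moreover have "ins H1 v = (if v = b then {a} else if v = b' then {a'} else ins H1' v)" for v
        using e1 b' unfolding H1_def by auto
      ultimately show ?thesis using sub H1' o' i' by (metis (no_types, lifting))
    next
      case False
      define H' where "H' = insert (a',b') (H - {(a,b),(a,b'),(a',b)})"
      have o': "outs H' u = (if u = a then {} else if u = a' then insert b' (outs H a' - {b}) else outs H u)" for u
        using b' a' False unfolding H'_def by auto
      have i': "ins H' v = (if v = b then {} else if v = b' then insert a' (ins H b' - {a}) else ins H v)" for v
        using a' b' False unfolding H'_def by auto
      have "card (H - {(a,b),(a,b'),(a',b)}) = card H - 3"
        using less.prems(1) ab ab' a'b a' b' by (simp add: card_Diff_subset)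
      moreover have "3 \<le> card H"
      proof -
        have "card {(a,b),(a,b'),(a',b)} = 3" using a' b' by simp
        moreover have "card {(a,b),(a,b'),(a',b)} \<le> card H"
          by (rule card_mono[OF less.prems(1)]) (use ab ab' a'b in auto)
        ultimately show ?thesis by simp
      qed
      ultimately have "card H' < card H" unfolding H'_def using less.prems(1)
        by (simp add: card_insert_if, linarith)
      moreover have "finite H'" using less.prems(1) H'_def by auto
      moreover have "\<forall>u. outs H' u = {} \<or> (\<exists>v w. v \<noteq> w \<and> outs H' u = {v,w})"
      proof
        fix u
        show "outs H' u = {} \<or> (\<exists>v w. v \<noteq> w \<and> outs H' u = {v,w})"
        proof (cases "u = a'")
          case True
          obtain c where "c \<noteq> b" "outs H a' = {b,c}"
            using two_elem[of b "outs H a'"] less.prems(2) a'b by auto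
          moreover have "c \<noteq> b'" using False \<open>outs H a' = {b,c}\<close> by (metis insertI1 insert_commute mem_outs)
          ultimately show ?thesis using o' True a' by auto
        qed (use o' less.prems(2) in auto)
      qed
      moreover have "\<forall>v. ins H' v = {} \<or> (\<exists>u w. u \<noteq> w \<and> ins H' v = {u,w})"
      proof
        fix v
        show "ins H' v = {} \<or> (\<exists>u w. u \<noteq> w \<and> ins H' v = {u,w})"
        proof (cases "v = b'")
          case True
          obtain c where "c \<noteq> a" "ins H b' = {a,c}"
            using two_elem[of a "ins H b'"] less.prems(3) ab' by auto
          moreover have "c \<noteq> a'" using False \<open>ins H b' = {a,c}\<close> by (metis insertI1 insert_commute mem_ins)
          ultimately show ?thesis using i' True b' by auto
        qed (use i' less.prems(3) in auto)
      qed
      ultimately have "\<exists>H1\<subseteq>H'. (\<forall>u. outs H' u \<noteq> {} \<longrightarrow> (\<exists>v. outs H1 u = {v})) \<and> (\<forall>v. ins H' v \<noteq> {} \<longrightarrow> (\<exists>u. ins H1 v = {u}))"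
        using less.hyps[of H'] by blast
      then obtain H1' where H1': "H1' \<subseteq> H'" "\<forall>u. outs H' u \<noteq> {} \<longrightarrow> (\<exists>v. outs H1' u = {v})"
        "\<forall>v. ins H' v \<noteq> {} \<longrightarrow> (\<exists>u. ins H1' v = {u})" by blast
      have e1: "outs H1' a = {}" "ins H1' b = {}"
        using outs_mono[OF H1'(1)] ins_mono[OF H1'(1)] o' i' by (metis subset_empty)+
      have nb: "(a',b) \<notin> H1'" "(a,b') \<notin> H1'" using H1'(1) unfolding H'_def using a' b' by auto
      show ?thesis
      proof (cases "(a',b') \<in> H1'")
        case True
        define H1 where "H1 = insert (a',b) (insert (a,b') (H1' - {(a',b')}))"
        have sub: "H1 \<subseteq> H" using H1' ab' a'b unfolding H1_def H'_def by auto
        have oo: "outs H1' a' = {b'}"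
        proof -
          have "outs H' a' \<noteq> {}" using o' a' by simp
          then obtain v where "outs H1' a' = {v}" using H1'(2) by blast
          then show ?thesis using True by auto
        qed
        have ii: "ins H1' b' = {a'}"
        proof -
          have "ins H' b' \<noteq> {}" using i' b' by simp
          then obtain v where "ins H1' b' = {v}" using H1'(3) by blast
          then show ?thesis using True by auto
        qed
        have "outs H1 u = (if u = a then {b'} else if u = a' then {b} else outs H1' u)" for u
          using a' b' oo e1 unfolding H1_def by (cases "u = a"; cases "u = a'") auto
        moreover have "ins H1 v = (if v = b then {a'} else if v = b' then {a} else ins H1' v)" for v
          using a' b' ii e1 unfolding H1_def by (cases "v = b"; cases "v = b'") auto
        ultimately show ?thesis 
          by (intro finish[OF sub H1'(2,3)]) (auto simp: o' i')
      next
        case F2: False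
        define H1 where "H1 = insert (a,b) H1'"
        have sub: "H1 \<subseteq> H" using H1' ab F2 unfolding H1_def H'_def by auto
        have "outs H1 u = (if u = a then {b} else outs H1' u)" for u
          using e1 unfolding H1_def by (cases "u = a") auto
        moreover have "ins H1 v = (if v = b then {a} else ins H1' v)" for v
          using e1 unfolding H1_def by (cases "v = b") auto
        ultimately show ?thesis 
          by (intro finish[OF sub H1'(2,3)]) (auto simp: o' i')
      qed
    qed
  qed
qed

lemma sum_ind: "finite D \<Longrightarrow> sum (\<lambda>e. if P e then (c::real) else 0) D = c * of_nat (card {e\<in>D. P e})"
proof -
  assume f: "finite D"
  have "sum (\<lambda>e. if P e then c else 0) D = sum (\<lambda>e. c) {e\<in>D. P e}"
    by (rule sum.inter_filter[OF f, symmetric])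
  also have "\<dots> = of_nat (card {e\<in>D. P e}) * c" by simp
  finally show ?thesis by (simp add: mult.commute)
qed

lemma vertex_cases:
  fixes f :: "'e \<Rightarrow> real"
  assumes "finite D" "\<forall>e\<in>D. f e \<in> {0, 1/2, 1}" "sum f D = 1"
  shows "(\<exists>e. {e'\<in>D. f e' = 1} = {e} \<and> {e'\<in>D. f e' = 1/2} = {}) \<or>
         ({e'\<in>D. f e' = 1} = {} \<and> (\<exists>e1 e2. e1 \<noteq> e2 \<and> {e'\<in>D. f e' = 1/2} = {e1,e2}))"
proof -
  define A where "A = {e'\<in>D. f e' = 1}"
  define B where "B = {e'\<in>D. f e' = 1/2}"
  have "sum f D = sum (\<lambda>e. (if f e = 1 then 1 else 0) + (if f e = 1/2 then 1/2 else 0)) D"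
    by (rule sum.cong) (use assms(2) in auto)
  also have "\<dots> = real (card A) + real (card B) / 2"
    unfolding A_def B_def sum.distrib using assms(1) by (simp add: sum_ind)
  finally have "real (card A) + real (card B) / 2 = 1" using assms(3) by simp
  then have "2 * card A + card B = 2" by linarith
  then have "(card A = 1 \<and> card B = 0) \<or> (card A = 0 \<and> card B = 2)" by presburger
  moreover have "finite A" "finite B" using assms(1) by (auto simp: A_def B_def)
  ultimately show ?thesis unfolding A_def[symmetric] B_def[symmetric]
    by (metis One_nat_def card_1_singleton_iff card_2_iff card_0_eq)
qed

lemma finite_arcs: "finite (arcs n)"
  by (rule finite_subset[of _ "{0..<n} \<times> {0..<n}"]) (auto simp: arcs_def)

lemma outs_img: "outs G w = snd ` {e\<in>G. fst e = w}"
  by (force simp: outs_def image_iff)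
lemma ins_img: "ins G w = fst ` {e\<in>G. snd e = w}"
  by (force simp: ins_def image_iff)

lemma card_outs: "card (outs G w) = card {e\<in>G. fst e = w}"
  unfolding outs_img by (rule card_image) (auto intro!: inj_onI prod_eqI)
lemma card_ins: "card (ins G w) = card {e\<in>G. snd e = w}"
  unfolding ins_img by (rule card_image) (auto intro!: inj_onI prod_eqI)

lemma sum_out: "G \<subseteq> arcs n \<Longrightarrow> sum (\<lambda>e. if e \<in> G then 1 else (0::real)) (delta_out n w) = real (card (outs G w))"
proof -
  assume G: "G \<subseteq> arcs n"
  have fin: "finite (delta_out n w)" by (rule finite_subset[OF _ finite_arcs[of n]]) (auto simp: delta_out_def)
  have "sum (\<lambda>e. if e \<in> G then 1 else (0::real)) (delta_out n w) = real (card {e \<in> delta_out n w. e \<in> G})"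
    using fin by (simp add: sum_ind)
  also have "{e \<in> delta_out n w. e \<in> G} = {e\<in>G. fst e = w}" using G by (auto simp: delta_out_def)
  finally show ?thesis by (simp add: card_outs)
qed

lemma sum_in: "G \<subseteq> arcs n \<Longrightarrow> sum (\<lambda>e. if e \<in> G then 1 else (0::real)) (delta_in n w) = real (card (ins G w))"
proof -
  assume G: "G \<subseteq> arcs n"
  have fin: "finite (delta_in n w)" by (rule finite_subset[OF _ finite_arcs[of n]]) (auto simp: delta_in_def)
  have "sum (\<lambda>e. if e \<in> G then 1 else (0::real)) (delta_in n w) = real (card {e \<in> delta_in n w. e \<in> G})"
    using fin by (simp add: sum_ind)
  also have "{e \<in> delta_in n w. e \<in> G} = {e\<in>G. snd e = w}" using G by (auto simp: delta_in_def)
  finally show ?thesis by (simp add: card_ins)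
qed

lemma cover:
  assumes "G \<subseteq> arcs n" "\<forall>w<n. (\<exists>v. outs G w = {v}) \<and> (\<exists>v. ins G w = {v})"
  shows "(\<lambda>e. if e \<in> G then 1 else 0) \<in> cycle_covers n"
  unfolding cycle_covers_def RE_def
proof (intro CollectI conjI allI impI ballI)
  fix w assume "w < n"
  then obtain v u where "outs G w = {v}" "ins G w = {u}" using assms(2) by blast
  then show "sum (\<lambda>e. if e \<in> G then 1 else (0::real)) (delta_out n w) = 1"
    "sum (\<lambda>e. if e \<in> G then 1 else (0::real)) (delta_in n w) = 1"
    using sum_out[OF assms(1)] sum_in[OF assms(1)] by auto
qed (use assms(1) in auto)

lemma vert:
  fixes x :: "nat \<times> nat \<Rightarrow> real"
  assumes "finite D" "\<forall>e\<in>D. x e \<in> {0, 1/2, 1}" "sum x D = 1"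
    and F: "{e\<in>D. x e = 1} = {e\<in>F. P e}" and H: "{e\<in>D. x e = 1/2} = {e\<in>H. P e}"
    and inj: "inj_on g {e. P e}"
  shows "(\<exists>v. g ` {e\<in>F. P e} = {v} \<and> g ` {e\<in>H. P e} = {}) \<or>
         (g ` {e\<in>F. P e} = {} \<and> (\<exists>v1 v2. v1 \<noteq> v2 \<and> g ` {e\<in>H. P e} = {v1,v2}))"
proof -
  from vertex_cases[OF assms(1-3)] show ?thesis
  proof
    assume "\<exists>e. {e'\<in>D. x e' = 1} = {e} \<and> {e'\<in>D. x e' = 1/2} = {}"
    then show ?thesis unfolding F H by auto
  next
    assume a: "{e'\<in>D. x e' = 1} = {} \<and> (\<exists>e1 e2. e1 \<noteq> e2 \<and> {e'\<in>D. x e' = 1/2} = {e1,e2})"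
    then obtain e1 e2 where e: "e1 \<noteq> e2" "{e\<in>H. P e} = {e1,e2}" unfolding H by blast
    then have "P e1" "P e2" by blast+
    then have "g e1 \<noteq> g e2" using inj e(1) by (auto dest: inj_onD)
    then show ?thesis using a e unfolding F by auto
  qed
qed

theorem mainTheorem2:
  fixes n :: nat and x :: "nat \<times> nat \<Rightarrow> real"
  assumes "n \<ge> 4"
    and "extreme_pt x (ASEP n)"
    and "\<forall>e \<in> arcs n. x e \<in> {0, 1/2, 1}"
  shows "\<exists>y1 \<in> cycle_covers n. \<exists>y2 \<in> cycle_covers n. x = (\<lambda>e. (1/2) * y1 e + (1/2) * y2 e)"
proof -
  have xA: "x \<in> ASEP n" using assms(2) by (simp add: extreme_pt_def)
  then have RE: "\<And>e. e \<notin> arcs n \<Longrightarrow> x e = 0" and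
    dg: "\<And>w. w < n \<Longrightarrow> sum x (delta_out n w) = 1 \<and> sum x (delta_in n w) = 1"
    by (auto simp: ASEP_def RE_def)
  define F where "F = {e\<in>arcs n. x e = 1}"
  define H where "H = {e\<in>arcs n. x e = 1/2}"
  have FA: "F \<subseteq> arcs n" and HA: "H \<subseteq> arcs n" by (auto simp: F_def H_def)
  have vals: "\<forall>e\<in>D. x e \<in> {0, 1/2, 1}" if "D \<subseteq> arcs n" for D using assms(3) that by auto
  have vo: "(\<exists>v. outs F w = {v} \<and> outs H w = {}) \<or>
         (outs F w = {} \<and> (\<exists>v1 v2. v1 \<noteq> v2 \<and> outs H w = {v1,v2}))" if "w < n" for w
  proof -
    have sub: "delta_out n w \<subseteq> arcs n" by (auto simp: delta_out_def)
    have "(\<exists>v. snd ` {e\<in>F. fst e = w} = {v} \<and> snd ` {e\<in>H. fst e = w} = {}) \<or>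
         (snd ` {e\<in>F. fst e = w} = {} \<and> (\<exists>v1 v2. v1 \<noteq> v2 \<and> snd ` {e\<in>H. fst e = w} = {v1,v2}))"
      by (rule vert[OF finite_subset[OF sub finite_arcs] vals[OF sub] conjunct1[OF dg[OF that]]])
        (auto simp: F_def H_def delta_out_def intro!: inj_onI prod_eqI)
    then show ?thesis unfolding outs_img .
  qed
  have vi: "(\<exists>v. ins F w = {v} \<and> ins H w = {}) \<or>
         (ins F w = {} \<and> (\<exists>v1 v2. v1 \<noteq> v2 \<and> ins H w = {v1,v2}))" if "w < n" for w
  proof -
    have sub: "delta_in n w \<subseteq> arcs n" by (auto simp: delta_in_def)
    have "(\<exists>v. fst ` {e\<in>F. snd e = w} = {v} \<and> fst ` {e\<in>H. snd e = w} = {}) \<or>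
         (fst ` {e\<in>F. snd e = w} = {} \<and> (\<exists>v1 v2. v1 \<noteq> v2 \<and> fst ` {e\<in>H. snd e = w} = {v1,v2}))"
      by (rule vert[OF finite_subset[OF sub finite_arcs] vals[OF sub] conjunct2[OF dg[OF that]]])
        (auto simp: F_def H_def delta_in_def intro!: inj_onI prod_eqI)
    then show ?thesis unfolding ins_img .
  qed
  have big: "outs G w = {}" "ins G w = {}" if "G \<subseteq> arcs n" "\<not> w < n" for G w
    using that by (auto simp: outs_def ins_def arcs_def)
  have "\<exists>H1\<subseteq>H. (\<forall>u. outs H u \<noteq> {} \<longrightarrow> (\<exists>v. outs H1 u = {v})) \<and> (\<forall>v. ins H v \<noteq> {} \<longrightarrow> (\<exists>u. ins H1 v = {u}))"
  proof (rule split2)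
    show "finite H" using finite_subset[OF HA finite_arcs] .
    show "\<forall>u. outs H u = {} \<or> (\<exists>v w. v \<noteq> w \<and> outs H u = {v, w})"
      using vo big(1)[OF HA] by metis
    show "\<forall>u. ins H u = {} \<or> (\<exists>v w. v \<noteq> w \<and> ins H u = {v, w})"
      using vi big(2)[OF HA] by metis
  qed
  then obtain H1 where H1: "H1 \<subseteq> H" "\<forall>u. outs H u \<noteq> {} \<longrightarrow> (\<exists>v. outs H1 u = {v})"
    "\<forall>v. ins H v \<noteq> {} \<longrightarrow> (\<exists>u. ins H1 v = {u})" by blast
  define G1 where "G1 = F \<union> H1"
  define G2 where "G2 = F \<union> (H - H1)"
  have c1: "(\<lambda>e. if e \<in> G1 then 1 else 0) \<in> cycle_covers n"
  proof (rule cover)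
    show "G1 \<subseteq> arcs n" using FA HA H1(1) by (auto simp: G1_def)
    show "\<forall>w<n. (\<exists>v. outs G1 w = {v}) \<and> (\<exists>v. ins G1 w = {v})"
    proof (intro allI impI conjI)
      fix w assume w: "w < n"
      show "\<exists>v. outs G1 w = {v}"
        using vo[OF w] H1(2) outs_mono[OF H1(1), of w] unfolding G1_def by auto
      show "\<exists>v. ins G1 w = {v}"
        using vi[OF w] H1(3) ins_mono[OF H1(1), of w] unfolding G1_def by auto
    qed
  qed
  have c2: "(\<lambda>e. if e \<in> G2 then 1 else 0) \<in> cycle_covers n"
  proof (rule cover)
    show "G2 \<subseteq> arcs n" using FA HA by (auto simp: G2_def)
    show "\<forall>w<n. (\<exists>v. outs G2 w = {v}) \<and> (\<exists>v. ins G2 w = {v})"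
    proof (intro allI impI conjI)
      fix w assume w: "w < n"
      show "\<exists>v. outs G2 w = {v}"
      proof (cases "outs H w = {}")
        case True
        then show ?thesis using vo[OF w] unfolding G2_def by auto
      next
        case False
        then obtain u where u: "outs H1 w = {u}" using H1(2) by blast
        obtain v1 v2 where "outs F w = {}" "v1 \<noteq> v2" "outs H w = {v1,v2}" using vo[OF w] False by blast
        moreover have "u \<in> outs H w" using u outs_mono[OF H1(1), of w] by auto
        ultimately show ?thesis using u unfolding G2_def by auto
      qed
      show "\<exists>v. ins G2 w = {v}"
      proof (cases "ins H w = {}")
        case True
        then show ?thesis using vi[OF w] unfolding G2_def by auto
      next
        case False
        then obtain u where u: "ins H1 w = {u}" using H1(3) by blast
        obtain v1 v2 where "ins F w = {}" "v1 \<noteq> v2" "ins H w = {v1,v2}" using vi[OF w] False by blast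
        moreover have "u \<in> ins H w" using u ins_mono[OF H1(1), of w] by auto
        ultimately show ?thesis using u unfolding G2_def by auto
      qed
    qed
  qed
  have "x = (\<lambda>e. (1/2) * (if e \<in> G1 then 1 else 0) + (1/2) * (if e \<in> G2 then 1 else 0))"
  proof
    fix e
    show "x e = (1/2) * (if e \<in> G1 then 1 else 0) + (1/2) * (if e \<in> G2 then 1 else 0)"
    proof (cases "e \<in> arcs n")
      case True
      then have "x e \<in> {0, 1/2, 1}" using assms(3) by blast
      then show ?thesis using True H1(1) unfolding G1_def G2_def F_def H_def by auto
    next
      case False
      then show ?thesis using RE[OF False] H1(1) unfolding G1_def G2_def F_def H_def by auto
    qed
  qed
  then show ?thesis by (rule bexI[OF bexI[OF _ c2] c1])
qed

end
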